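(* Let $\omega\in\mathcal{F}^1(\mathbb{P}^n,e)$. If $\omega\in\mathcal{U}$ then $\sqrt{I(\omega)}=\sqrt{K(\omega)}$. Conversely, if $\sqrt{I(\omega)}=\sqrt{K(\omega)}$ then $\omega\in\mathcal{U}$.
   Context: Let $S=\mathbb{C}[x_0,\ldots,x_n]$ and $R=\sum_i x_i\partial/\partial x_i$. $\mathcal{F}^1(\mathbb{P}^n,e)$ ($e\ge2$) is the set of (classes up to scalar of) 1-forms $\omega=\sum_{i=0}^n A_i\,dx_i$, $A_i\in S$ homogeneous of degree $e-1$, not all zero, with $i_R\omega=0$, $\omega\wedge d\omega=0$ and zero locus $\mathrm{sing}(\omega)\subseteq\mathbb{P}^n$ of codimension $\ge2$. For a form $\eta$, $\mathscr{C}(\eta)$ is the ideal of $S$ generated by its polynomial coefficients. $J(\omega)=\mathscr{C}(\omega)=(A_0,\ldots,A_n)$. $I(\omega)=\{h\in S:\ h\,d\omega=\omega\wedge\eta\text{ for some polynomial 1-form }\eta\}$ (the ideal of graded projective unfoldings). $K(\omega)=(J(\omega):\mathscr{C}(d\omega))$, and $\mathcal{K}=\mathrm{Proj}(S/K(\omega))$. For a homogeneous prime $\mathfrak{p}\subset S$ other than $(x_0,\ldots,x_n)$ (a point of $\mathbb{P}^n$), subscript $\mathfrak{p}$ denotes localization; $\mathfrak{p}$ is a division point of $\omega$ if $1\in I(\omega)_\mathfrak{p}$. $\mathcal{U}$ is the set of $\omega\in\mathcal{F}^1(\mathbb{P}^n,e)$ such that every point $\mathfrak{p}\notin\mathcal{K}$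 is a division point of $\omega$. *)

theory Defs
  imports Complex_Main "HOL-Library.Poly_Mapping"
begin

text \<open>Polynomial ring S = C[x_v : v in 'v]; for a finite type 'v with CARD('v) = n+1
  this is C[x_0,...,x_n].\<close>
type_synonym 'v mpoly = "('v \<Rightarrow>\<^sub>0 nat) \<Rightarrow>\<^sub>0 complex"

definition Var :: "'v \<Rightarrow> 'v mpoly" where
  "Var i = Poly_Mapping.single (Poly_Mapping.single i 1) 1"

definition mdeg :: "('v::finite \<Rightarrow>\<^sub>0 nat) \<Rightarrow> nat" where
  "mdeg m = (\<Sum>i\<in>UNIV. Poly_Mapping.lookup m i)"

definition homogeneous :: "nat \<Rightarrow> 'v::finite mpoly \<Rightarrow> bool" where
  "homogeneous d p \<longleftrightarrow> (\<forall>m\<in>Poly_Mapping.keys p. mdeg m = d)"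

definition hcomp :: "nat \<Rightarrow> 'v::finite mpoly \<Rightarrow> 'v mpoly" where
  "hcomp d p = Abs_poly_mapping (\<lambda>m. if mdeg m = d then Poly_Mapping.lookup p m else 0)"

definition pd :: "'v \<Rightarrow> 'v mpoly \<Rightarrow> 'v mpoly" where
  "pd i p = (\<Sum>m\<in>Poly_Mapping.keys p. Poly_Mapping.single (m - Poly_Mapping.single i 1)
                               (of_nat (Poly_Mapping.lookup m i) * Poly_Mapping.lookup p m))"

definition ideal_gen :: "'a::comm_ring_1 set \<Rightarrow> 'a set" where
  "ideal_gen G = {x. \<exists>F c. finite F \<and> F \<subseteq> G \<and> x = (\<Sum>g\<in>F. c g * g)}"

definition is_ideal :: "'a::comm_ring_1 set \<Rightarrow> bool" where
  "is_ideal I \<longleftrightarrow> 0 \<in> I \<and> (\<forall>a\<in>I. \<forall>b\<in>I. a + b \<in> I) \<and> (\<forall>a\<in>I. \<forall>r. r * a \<in> I)"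

definition prime_ideal :: "'a::comm_ring_1 set \<Rightarrow> bool" where
  "prime_ideal P \<longleftrightarrow> is_ideal P \<and> P \<noteq> UNIV \<and> (\<forall>a b. a * b \<in> P \<longrightarrow> a \<in> P \<or> b \<in> P)"

definition radical :: "'a::comm_ring_1 set \<Rightarrow> 'a set" where
  "radical I = {f. \<exists>k. f ^ k \<in> I}"

definition homogeneous_ideal :: "'v::finite mpoly set \<Rightarrow> bool" where
  "homogeneous_ideal P \<longleftrightarrow> is_ideal P \<and> (\<forall>p\<in>P. \<forall>d. hcomp d p \<in> P)"

definition irrelevant :: "'v::finite mpoly set" where
  "irrelevant = ideal_gen (range Var)"

definition proj_point :: "'v::finite mpoly set \<Rightarrow> bool" where
  "proj_point P \<longleftrightarrow> prime_ideal P \<and> homogeneous_ideal P \<and> P \<noteq> irrelevant"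

text \<open>height of an ideal is at least 2: every prime containing it has height >= 2,
  i.e. admits a chain of primes P0 < P1 < P.  For a homogeneous ideal J this is
  codim V(J) >= 2 in P^n.\<close>
definition height_ge2 :: "'a::comm_ring_1 set \<Rightarrow> bool" where
  "height_ge2 J \<longleftrightarrow> (\<forall>P. prime_ideal P \<and> J \<subseteq> P \<longrightarrow>
      (\<exists>P0 P1. prime_ideal P0 \<and> prime_ideal P1 \<and> P0 \<subset> P1 \<and> P1 \<subset> P))"

text \<open>Differential forms: a 1-form sum A_i dx_i is a function A :: 'v => poly;
  a 2-form is given by its antisymmetric coefficient function B i j (coefficient of dx_i/\dx_j);
  a 3-form by its alternating coefficient function.\<close>

definition d1 :: "('v \<Rightarrow> 'v mpoly) \<Rightarrow> 'v \<Rightarrow> 'v \<Rightarrow> 'v mpoly" where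
  "d1 A i j = pd i (A j) - pd j (A i)"

definition wedge11 :: "('v \<Rightarrow> 'v mpoly) \<Rightarrow> ('v \<Rightarrow> 'v mpoly) \<Rightarrow> 'v \<Rightarrow> 'v \<Rightarrow> 'v mpoly" where
  "wedge11 A E i j = A i * E j - A j * E i"

definition wedge12 :: "('v \<Rightarrow> 'v mpoly) \<Rightarrow> ('v \<Rightarrow> 'v \<Rightarrow> 'v mpoly) \<Rightarrow> 'v \<Rightarrow> 'v \<Rightarrow> 'v \<Rightarrow> 'v mpoly" where
  "wedge12 A B i j k = A i * B j k - A j * B i k + A k * B i j"

text \<open>contraction with the radial field R = sum x_i d/dx_i\<close>
definition contrR :: "('v::finite \<Rightarrow> 'v mpoly) \<Rightarrow> 'v mpoly" where
  "contrR A = (\<Sum>i\<in>UNIV. Var i * A i)"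

definition F1 :: "nat \<Rightarrow> ('v::finite \<Rightarrow> 'v mpoly) \<Rightarrow> bool" where
  "F1 e A \<longleftrightarrow> (\<forall>i. homogeneous (e - 1) (A i)) \<and> (\<exists>i. A i \<noteq> 0) \<and>
     contrR A = 0 \<and> (\<forall>i j k. wedge12 A (d1 A) i j k = 0) \<and>
     height_ge2 (ideal_gen (range A))"

definition J_ideal :: "('v::finite \<Rightarrow> 'v mpoly) \<Rightarrow> 'v mpoly set" where
  "J_ideal A = ideal_gen (range A)"

definition I_ideal :: "('v::finite \<Rightarrow> 'v mpoly) \<Rightarrow> 'v mpoly set" where
  "I_ideal A = {h. \<exists>E. \<forall>i j. h * d1 A i j = wedge11 A E i j}"

definition Cd_ideal :: "('v::finite \<Rightarrow> 'v mpoly) \<Rightarrow> 'v mpoly set" where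
  "Cd_ideal A = ideal_gen {d1 A i j | i j. True}"

definition K_ideal :: "('v::finite \<Rightarrow> 'v mpoly) \<Rightarrow> 'v mpoly set" where
  "K_ideal A = {h. \<forall>c\<in>Cd_ideal A. h * c \<in> J_ideal A}"

text \<open>1 is in the localization I_P: 1 = h/s with h in I, s not in P, i.e.
  t*(h*1 - s*1) = 0 for some t not in P\<close>
definition division_point :: "('v::finite \<Rightarrow> 'v mpoly) \<Rightarrow> 'v mpoly set \<Rightarrow> bool" where
  "division_point A P \<longleftrightarrow> (\<exists>h s t. h \<in> I_ideal A \<and> s \<notin> P \<and> t \<notin> P \<and> t * (h * 1 - s * 1) = 0)"

text \<open>P lies in Proj(S/K) iff K is contained in P\<close>
definition U_set :: "nat \<Rightarrow> ('v::finite \<Rightarrow> 'v mpoly) set" where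
  "U_set e = {A. F1 e A \<and> (\<forall>P. proj_point P \<and> \<not> K_ideal A \<subseteq> P \<longrightarrow> division_point A P)}"

end

theory Submission imports Defs begin

lemma ideal_gen_ideal: "is_ideal (ideal_gen G)"
  unfolding is_ideal_def
proof (intro conjI ballI allI)
  show "0 \<in> ideal_gen G" unfolding ideal_gen_def by (rule CollectI, rule exI[of _ "{}"], auto)
next
  fix a b assume "a \<in> ideal_gen G" "b \<in> ideal_gen G"
  then obtain F c F' c' where F: "finite F" "F \<subseteq> G" "a = (\<Sum>g\<in>F. c g * g)"
     and F': "finite F'" "F' \<subseteq> G" "b = (\<Sum>g\<in>F'. c' g * g)" unfolding ideal_gen_def by blast
  define d where "d g = (if g \<in> F then c g else 0) + (if g \<in> F' then c' g else 0)" for g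
  have 1: "(\<Sum>g\<in>F\<union>F'. (if g \<in> F then c g else 0) * g) = (\<Sum>g\<in>F. c g * g)"
    by (rule sum.mono_neutral_cong_right) (use F F' in auto)
  have 2: "(\<Sum>g\<in>F\<union>F'. (if g \<in> F' then c' g else 0) * g) = (\<Sum>g\<in>F'. c' g * g)"
    by (rule sum.mono_neutral_cong_right) (use F F' in auto)
  have "a + b = (\<Sum>g\<in>F\<union>F'. d g * g)"
    unfolding d_def distrib_right sum.distrib 1 2 F(3) F'(3) ..
  then show "a + b \<in> ideal_gen G" unfolding ideal_gen_def
    by (intro CollectI exI[of _ "F \<union> F'"] exI[of _ d]) (use F F' in auto)
next
  fix a r assume "a \<in> ideal_gen G"
  then obtain F c where F: "finite F" "F \<subseteq> G" "a = (\<Sum>g\<in>F. c g * g)" unfolding ideal_gen_def by blast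
  have "r * a = (\<Sum>g\<in>F. (r * c g) * g)" unfolding F(3) sum_distrib_left by (rule sum.cong) (auto simp: mult.assoc)
  then show "r * a \<in> ideal_gen G" unfolding ideal_gen_def
    by (intro CollectI exI[of _ F] exI[of _ "\<lambda>g. r * c g"]) (use F in auto)
qed

lemma ideal_gen_base: "g \<in> G \<Longrightarrow> g \<in> ideal_gen G"
  unfolding ideal_gen_def by (rule CollectI, rule exI[of _ "{g}"], rule exI[of _ "\<lambda>_. 1"], auto)

lemma ideal_zero: "is_ideal I \<Longrightarrow> 0 \<in> I" unfolding is_ideal_def by blast
lemma ideal_add: "is_ideal I \<Longrightarrow> a \<in> I \<Longrightarrow> b \<in> I \<Longrightarrow> a + b \<in> I" unfolding is_ideal_def by blast
lemma ideal_mult: "is_ideal I \<Longrightarrow> a \<in> I \<Longrightarrow> r * a \<in> I" unfolding is_ideal_def by blast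
lemma ideal_mult2: "is_ideal I \<Longrightarrow> a \<in> I \<Longrightarrow> a * r \<in> I" unfolding is_ideal_def by (metis mult.commute)
lemma ideal_uminus: "is_ideal I \<Longrightarrow> a \<in> I \<Longrightarrow> - a \<in> I"
  using ideal_mult[of I a "-1"] by simp
lemma ideal_diff: "is_ideal I \<Longrightarrow> a \<in> I \<Longrightarrow> b \<in> I \<Longrightarrow> a - b \<in> I"
  using ideal_add[of I a "-b"] ideal_uminus[of I b] by simp
lemma ideal_sum: "is_ideal I \<Longrightarrow> (\<And>x. x \<in> X \<Longrightarrow> f x \<in> I) \<Longrightarrow> sum f X \<in> I"
proof (induction X rule: infinite_finite_induct)
  case (infinite A) then show ?case by (simp add: ideal_zero)
next
  case empty then show ?case by (simp add: ideal_zero)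
next
  case (insert x F) then show ?case by (simp add: ideal_add)
qed

lemma ideal_gen_least: "is_ideal I \<Longrightarrow> G \<subseteq> I \<Longrightarrow> ideal_gen G \<subseteq> I"
  unfolding ideal_gen_def by (auto intro!: ideal_sum ideal_mult)

lemma ideal_one: "is_ideal I \<Longrightarrow> 1 \<in> I \<Longrightarrow> I = UNIV"
  using ideal_mult[of I 1] by force


lemma lookup_hcomp: "Poly_Mapping.lookup (hcomp d p) m = (if mdeg m = d then Poly_Mapping.lookup p m else 0)"
proof -
  have "finite {m. (if mdeg m = d then Poly_Mapping.lookup p m else 0) \<noteq> 0}"
    by (rule finite_subset[OF _ finite_lookup[of p]]) auto
  then show ?thesis unfolding hcomp_def by simp
qed

lemma hcomp_add: "hcomp d (p + q) = hcomp d p + hcomp d q"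
  by (rule poly_mapping_eqI) (simp add: lookup_hcomp lookup_add)
lemma hcomp_uminus: "hcomp d (- p) = - hcomp d p"
  by (rule poly_mapping_eqI) (simp add: lookup_hcomp)
lemma hcomp_diff: "hcomp d (p - q) = hcomp d p - hcomp d q"
  by (rule poly_mapping_eqI) (simp add: lookup_hcomp lookup_minus)
lemma hcomp_zero[simp]: "hcomp d 0 = 0"
  by (rule poly_mapping_eqI) (simp add: lookup_hcomp)
lemma hcomp_sum: "hcomp d (sum f X) = (\<Sum>x\<in>X. hcomp d (f x))"
  by (induction X rule: infinite_finite_induct) (auto simp: hcomp_add)

lemma mdeg_add: "mdeg (a + b) = mdeg a + mdeg b"
  unfolding mdeg_def by (simp add: lookup_add sum.distrib)

lemma homogeneous_hcomp: "homogeneous d (hcomp d p)"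
  unfolding homogeneous_def
proof
  fix m assume "m \<in> Poly_Mapping.keys (hcomp d p)"
  then have "Poly_Mapping.lookup (hcomp d p) m \<noteq> 0" by (simp add: in_keys_iff)
  then show "mdeg m = d" unfolding lookup_hcomp by (cases "mdeg m = d") auto
qed

lemma hcomp_homog: "homogeneous a p \<Longrightarrow> hcomp d p = (if d = a then p else 0)"
  unfolding homogeneous_def
proof (rule poly_mapping_eqI)
  fix m assume h: "\<forall>m\<in>Poly_Mapping.keys p. mdeg m = a"
  show "Poly_Mapping.lookup (hcomp d p) m = Poly_Mapping.lookup (if d = a then p else 0) m"
  proof (cases "m \<in> Poly_Mapping.keys p")
    case True then show ?thesis using h by (simp add: lookup_hcomp)
  next
    case False then show ?thesis by (simp add: lookup_hcomp in_keys_iff)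
  qed
qed

lemma homogeneous_zero[simp]: "homogeneous d 0"
  unfolding homogeneous_def by simp
lemma homogeneous_add: "homogeneous d p \<Longrightarrow> homogeneous d q \<Longrightarrow> homogeneous d (p + q)"
  unfolding homogeneous_def using keys_add[of p q] by (meson UnE subsetD)
lemma homogeneous_diff: "homogeneous d p \<Longrightarrow> homogeneous d q \<Longrightarrow> homogeneous d (p - q)"
  unfolding homogeneous_def using keys_diff[of p q] by (meson UnE subsetD)
lemma homogeneous_sum: "(\<And>x. x \<in> X \<Longrightarrow> homogeneous d (f x)) \<Longrightarrow> homogeneous d (sum f X)"
  by (induction X rule: infinite_finite_induct) (auto intro: homogeneous_add)
lemma homogeneous_mult: "homogeneous a p \<Longrightarrow> homogeneous b q \<Longrightarrow> homogeneous (a + b) (p * q)"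
  unfolding homogeneous_def
proof (intro ballI)
  fix m assume h: "\<forall>m\<in>Poly_Mapping.keys p. mdeg m = a" "\<forall>m\<in>Poly_Mapping.keys q. mdeg m = b"
    and m: "m \<in> Poly_Mapping.keys (p * q)"
  then obtain x y where "m = x + y" "x \<in> Poly_Mapping.keys p" "y \<in> Poly_Mapping.keys q"
    using keys_mult[of p q] by blast
  then show "mdeg m = a + b" using h by (simp add: mdeg_add)
qed

lemma bound_exists: "\<exists>N. \<forall>m\<in>Poly_Mapping.keys p. mdeg m \<le> N"
  by (rule exI[of _ "Max (mdeg ` Poly_Mapping.keys p)"]) (auto intro!: Max_ge)

lemma hcomp_decomp: "\<forall>m\<in>Poly_Mapping.keys p. mdeg m \<le> N \<Longrightarrow> p = (\<Sum>k\<le>N. hcomp k p)"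
proof (rule poly_mapping_eqI)
  fix m assume N: "\<forall>m\<in>Poly_Mapping.keys p. mdeg m \<le> N"
  show "Poly_Mapping.lookup p m = Poly_Mapping.lookup (\<Sum>k\<le>N. hcomp k p) m"
  proof (cases "m \<in> Poly_Mapping.keys p")
    case True
    then have "mdeg m \<le> N" using N by blast
    then show ?thesis by (simp add: lookup_sum lookup_hcomp)
  next
    case False
    then show ?thesis by (simp add: lookup_sum lookup_hcomp in_keys_iff)
  qed
qed

lemma hcomp_above: "\<forall>m\<in>Poly_Mapping.keys p. mdeg m \<le> N \<Longrightarrow> N < d \<Longrightarrow> hcomp d p = 0"
  by (rule poly_mapping_eqI) (auto simp: lookup_hcomp, meson in_keys_iff leD)

lemma hcomp_hcomp: "hcomp d (hcomp k p) = (if d = k then hcomp d p else 0)"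
  using hcomp_homog[OF homogeneous_hcomp[of k p], of d] by simp

lemma hcomp_mult_homog:
  assumes "homogeneous a p"
  shows "hcomp d (p * q) = (if a \<le> d then p * hcomp (d - a) q else 0)"
proof -
  obtain N where N: "\<forall>m\<in>Poly_Mapping.keys q. mdeg m \<le> N" using bound_exists by blast
  have "hcomp d (p * q) = hcomp d (\<Sum>k\<le>N. p * hcomp k q)"
    by (subst hcomp_decomp[OF N]) (simp add: sum_distrib_left)
  also have "\<dots> = (\<Sum>k\<le>N. if d = a + k then p * hcomp k q else 0)"
    unfolding hcomp_sum
    by (rule sum.cong[OF refl], rule hcomp_homog, rule homogeneous_mult[OF assms homogeneous_hcomp])
  also have "\<dots> = (if a \<le> d \<and> d - a \<le> N then p * hcomp (d - a) q else 0)"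
  proof (cases "a \<le> d \<and> d - a \<le> N")
    case True
    have "(\<Sum>k\<le>N. if d = a + k then p * hcomp k q else 0) = (\<Sum>k\<le>N. if k = d - a then p * hcomp k q else 0)"
      by (rule sum.cong) (use True in auto)
    also have "\<dots> = p * hcomp (d - a) q" using True by (subst sum.delta) auto
    finally show ?thesis using True by simp
  next
    case False
    then show ?thesis by (auto intro!: sum.neutral)
  qed
  also have "\<dots> = (if a \<le> d then p * hcomp (d - a) q else 0)"
    using hcomp_above[OF N, of "d - a"] by auto
  finally show ?thesis .
qed


lemma homogeneous_single: "mdeg k = d \<Longrightarrow> homogeneous d (Poly_Mapping.single k v)"
  unfolding homogeneous_def by simp

lemma mdeg_single1: "mdeg (Poly_Mapping.single i (1::nat)) = 1"
  unfolding mdeg_def by (simp add: lookup_single when_def)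

lemma homogeneous_pd: assumes "homogeneous d p" shows "homogeneous (d - 1) (pd i p)"
  unfolding pd_def
proof (rule homogeneous_sum)
  fix m assume m: "m \<in> Poly_Mapping.keys p"
  show "homogeneous (d - 1) (Poly_Mapping.single (m - Poly_Mapping.single i 1)
          (of_nat (Poly_Mapping.lookup m i) * Poly_Mapping.lookup p m))"
  proof (cases "Poly_Mapping.lookup m i = 0")
    case True then show ?thesis by simp
  next
    case False
    have eq: "m = (m - Poly_Mapping.single i 1) + Poly_Mapping.single i 1"
    proof (rule poly_mapping_eqI)
      fix j
      show "Poly_Mapping.lookup m j = Poly_Mapping.lookup ((m - Poly_Mapping.single i 1) + Poly_Mapping.single i 1) j"
        unfolding lookup_add lookup_minus lookup_single when_def
        using False by (cases "i = j") simp_all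
    qed
    have "mdeg m = d" using assms m unfolding homogeneous_def by blast
    then have "mdeg (m - Poly_Mapping.single i 1) = d - 1"
      using arg_cong[OF eq, of mdeg] unfolding mdeg_add mdeg_single1 by simp
    then show ?thesis by (rule homogeneous_single)
  qed
qed

lemma homogeneous_d1:
  assumes "\<And>i. homogeneous (e - 1) (A i)"
  shows "homogeneous (e - 2) (d1 A i j)"
proof -
  have "homogeneous (e - 1 - 1) (d1 A i j)"
    unfolding d1_def by (intro homogeneous_diff homogeneous_pd assms)
  moreover have "e - 1 - 1 = e - (2::nat)" by simp
  ultimately show ?thesis by simp
qed

lemma I_is_ideal: "is_ideal (I_ideal A)"
  unfolding is_ideal_def I_ideal_def
proof (intro conjI ballI allI)
  show "0 \<in> {h. \<exists>E. \<forall>i j. h * d1 A i j = wedge11 A E i j}"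
    by (rule CollectI, rule exI[of _ "\<lambda>_. 0"]) (simp add: wedge11_def)
next
  fix a b assume "a \<in> {h. \<exists>E. \<forall>i j. h * d1 A i j = wedge11 A E i j}"
     "b \<in> {h. \<exists>E. \<forall>i j. h * d1 A i j = wedge11 A E i j}"
  then obtain E E' where E: "\<forall>i j. a * d1 A i j = wedge11 A E i j"
     and E': "\<forall>i j. b * d1 A i j = wedge11 A E' i j" by blast
  have "\<forall>i j. (a + b) * d1 A i j = wedge11 A (\<lambda>k. E k + E' k) i j"
    using E E' by (simp add: wedge11_def distrib_right distrib_left)
  then show "a + b \<in> {h. \<exists>E. \<forall>i j. h * d1 A i j = wedge11 A E i j}" by blast
next
  fix a r assume "a \<in> {h. \<exists>E. \<forall>i j. h * d1 A i j = wedge11 A E i j}"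
  then obtain E where E: "\<forall>i j. a * d1 A i j = wedge11 A E i j" by blast
  have "\<forall>i j. (r * a) * d1 A i j = wedge11 A (\<lambda>k. r * E k) i j"
  proof (intro allI)
    fix i j
    have "(r * a) * d1 A i j = r * (a * d1 A i j)" by (simp add: mult.assoc)
    also have "\<dots> = wedge11 A (\<lambda>k. r * E k) i j" using E by (simp add: wedge11_def right_diff_distrib mult.left_commute)
    finally show "(r * a) * d1 A i j = wedge11 A (\<lambda>k. r * E k) i j" .
  qed
  then show "r * a \<in> {h. \<exists>E. \<forall>i j. h * d1 A i j = wedge11 A E i j}" by blast
qed

lemma I_homogeneous:
  assumes hA: "\<And>i. homogeneous (e - 1) (A i)" and e: "e \<ge> 2"
  shows "homogeneous_ideal (I_ideal A)"
  unfolding homogeneous_ideal_def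
proof (intro conjI I_is_ideal ballI allI)
  fix h d assume "h \<in> I_ideal A"
  then obtain E where E: "\<forall>i j. h * d1 A i j = wedge11 A E i j" unfolding I_ideal_def by blast
  define k where "k = d + (e - 2)"
  define E' where "E' j = (if e - 1 \<le> k then hcomp (k - (e - 1)) (E j) else 0)" for j
  have "\<forall>i j. hcomp d h * d1 A i j = wedge11 A E' i j"
  proof (intro allI)
    fix i j
    have 1: "hcomp k (d1 A i j * h) = d1 A i j * hcomp d h"
      by (subst hcomp_mult_homog[OF homogeneous_d1[OF hA]]) (simp add: k_def)
    have 2: "hcomp k (A i' * E j') = A i' * E' j'" for i' j'
      by (subst hcomp_mult_homog[OF hA]) (simp add: E'_def)
    have 3: "d1 A i j * h = A i * E j - A j * E i"
      using E unfolding wedge11_def by (metis mult.commute)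
    have "hcomp d h * d1 A i j = hcomp k (d1 A i j * h)" using 1 by (simp add: mult.commute)
    also have "\<dots> = hcomp k (A i * E j) - hcomp k (A j * E i)" unfolding 3 by (rule hcomp_diff)
    also have "\<dots> = wedge11 A E' i j" unfolding 2 wedge11_def ..
    finally show "hcomp d h * d1 A i j = wedge11 A E' i j" .
  qed
  then show "hcomp d h \<in> I_ideal A" unfolding I_ideal_def by blast
qed

lemma J_is_ideal: "is_ideal (J_ideal A)"
  unfolding J_ideal_def by (rule ideal_gen_ideal)

lemma I_sub_K: "I_ideal A \<subseteq> K_ideal A"
proof
  fix h assume "h \<in> I_ideal A"
  then obtain E where E: "\<forall>i j. h * d1 A i j = wedge11 A E i j" unfolding I_ideal_def by blast
  have idl: "is_ideal {c. h * c \<in> J_ideal A}"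
    unfolding is_ideal_def
    using J_is_ideal[of A] by (simp add: distrib_left mult.left_commute ideal_zero ideal_add ideal_mult)
  have "{d1 A i j |i j. True} \<subseteq> {c. h * c \<in> J_ideal A}"
  proof
    fix c assume "c \<in> {d1 A i j |i j. True}"
    then obtain i j where c: "c = d1 A i j" by blast
    have "A i \<in> J_ideal A" "A j \<in> J_ideal A" unfolding J_ideal_def by (auto intro: ideal_gen_base)
    then have "A i * E j - A j * E i \<in> J_ideal A"
      using J_is_ideal[of A] by (intro ideal_diff ideal_mult2)
    then show "c \<in> {c. h * c \<in> J_ideal A}" using E c unfolding wedge11_def by simp
  qed
  then have "Cd_ideal A \<subseteq> {c. h * c \<in> J_ideal A}"
    unfolding Cd_ideal_def by (rule ideal_gen_least[OF idl])
  then show "h \<in> K_ideal A" unfolding K_ideal_def by blast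
qed


lemma mem_of_hcomps: "is_ideal M \<Longrightarrow> (\<And>k. hcomp k p \<in> M) \<Longrightarrow> p \<in> M"
proof -
  assume M: "is_ideal M" and h: "\<And>k. hcomp k p \<in> M"
  obtain N where N: "\<forall>m\<in>Poly_Mapping.keys p. mdeg m \<le> N" using bound_exists by blast
  have "(\<Sum>k\<le>N. hcomp k p) \<in> M" by (rule ideal_sum[OF M h])
  then show "p \<in> M" using hcomp_decomp[OF N] by simp
qed

lemma hcomp_lowpart: "hcomp k (\<Sum>j\<le>D. hcomp j a) = (if k \<le> D then hcomp k a else 0)"
  by (simp add: hcomp_sum hcomp_hcomp)

lemma top_prod:
  "hcomp (da + db) ((\<Sum>k\<le>da. hcomp k a) * (\<Sum>l\<le>db. hcomp l b)) = hcomp da a * hcomp db b"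
proof -
  have "hcomp (da + db) ((\<Sum>k\<le>da. hcomp k a) * (\<Sum>l\<le>db. hcomp l b))
      = (\<Sum>k\<le>da. \<Sum>l\<le>db. hcomp (da + db) (hcomp k a * hcomp l b))"
    by (simp add: sum_product hcomp_sum)
  also have "\<dots> = (\<Sum>k\<le>da. \<Sum>l\<le>db. if da + db = k + l then hcomp k a * hcomp l b else 0)"
    by (intro sum.cong refl hcomp_homog homogeneous_mult homogeneous_hcomp)
  also have "\<dots> = (\<Sum>k\<le>da. if k = da then hcomp da a * hcomp db b else 0)"
  proof (rule sum.cong[OF refl])
    fix k assume k: "k \<in> {..da}"
    show "(\<Sum>l\<le>db. if da + db = k + l then hcomp k a * hcomp l b else 0)
        = (if k = da then hcomp da a * hcomp db b else 0)"
    proof (cases "k = da")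
      case True
      have "(\<Sum>l\<le>db. if da + db = k + l then hcomp k a * hcomp l b else 0)
          = (\<Sum>l\<le>db. if l = db then hcomp k a * hcomp l b else 0)"
        by (rule sum.cong) (use True in auto)
      then show ?thesis using True by simp
    next
      case False
      then have "k < da" using k by simp
      then have "(\<Sum>l\<le>db. if da + db = k + l then hcomp k a * hcomp l b else 0) = (\<Sum>l\<le>db. 0)"
        by (intro sum.cong refl) auto
      then show ?thesis using False by simp
    qed
  qed
  also have "\<dots> = hcomp da a * hcomp db b" by simp
  finally show ?thesis .
qed

lemma ext_hideal:
  assumes M: "homogeneous_ideal M" and a: "homogeneous da a"
  shows "homogeneous_ideal {p + r * a | p r. p \<in> M}"
proof -
  have iM: "is_ideal M" and hM: "\<And>p d. p \<in> M \<Longrightarrow> hcomp d p \<in> M"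
    using M unfolding homogeneous_ideal_def by auto
  show ?thesis
    unfolding homogeneous_ideal_def is_ideal_def
  proof (intro conjI ballI allI)
    show "0 \<in> {p + r * a | p r. p \<in> M}"
      using ideal_zero[OF iM] by (intro CollectI exI[of _ 0] exI[of _ "0::'a mpoly"]) simp
  next
    fix x y assume "x \<in> {p + r * a | p r. p \<in> M}" "y \<in> {p + r * a | p r. p \<in> M}"
    then obtain p r p' r' where "x = p + r * a" "p \<in> M" "y = p' + r' * a" "p' \<in> M" by blast
    then have "x + y = (p + p') + (r + r') * a \<and> p + p' \<in> M"
      by (simp add: algebra_simps ideal_add[OF iM])
    then show "x + y \<in> {p + r * a | p r. p \<in> M}" by blast
  next
    fix x s assume "x \<in> {p + r * a | p r. p \<in> M}"
    then obtain p r where "x = p + r * a" "p \<in> M" by blast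
    then have "s * x = (s * p) + (s * r) * a \<and> s * p \<in> M"
      by (simp add: algebra_simps ideal_mult2[OF iM])
    then show "s * x \<in> {p + r * a | p r. p \<in> M}" by blast
  next
    fix x d assume "x \<in> {p + r * a | p r. p \<in> M}"
    then obtain p r where x: "x = p + r * a" "p \<in> M" by blast
    have "hcomp d x = hcomp d p + (if da \<le> d then hcomp (d - da) r else 0) * a"
      unfolding x hcomp_add by (subst mult.commute, subst hcomp_mult_homog[OF a]) (simp add: mult.commute)
    moreover have "hcomp d p \<in> M" using hM x by blast
    ultimately show "hcomp d x \<in> {p + r * a | p r. p \<in> M}" by blast
  qed
qed

lemma pow_not_in_prime: "prime_ideal P \<Longrightarrow> f \<notin> P \<Longrightarrow> f ^ k \<notin> P"
proof (induction k)
  case 0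
  then show ?case unfolding prime_ideal_def using ideal_one by fastforce
next
  case (Suc k)
  then show ?case unfolding prime_ideal_def by auto
qed


lemma top_index:
  assumes iM: "is_ideal M" and hM: "\<And>p d. p \<in> M \<Longrightarrow> hcomp d p \<in> M" and a: "a \<notin> M"
  shows "\<exists>D. hcomp D a \<notin> M \<and> (\<forall>k>D. hcomp k a \<in> M)"
proof -
  obtain N where N: "\<forall>m\<in>Poly_Mapping.keys a. mdeg m \<le> N" using bound_exists by blast
  define S where "S = {k. k \<le> N \<and> hcomp k a \<notin> M}"
  have fin: "finite S" unfolding S_def by simp
  have ne: "S \<noteq> {}"
  proof
    assume "S = {}"
    then have "hcomp k a \<in> M" for k
      using hcomp_above[OF N, of k] ideal_zero[OF iM] unfolding S_def by (cases "k \<le> N") auto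
    then have "a \<in> M" by (rule mem_of_hcomps[OF iM])
    then show False using a by simp
  qed
  define D where "D = Max S"
  have "D \<in> S" unfolding D_def using fin ne by (rule Max_in)
  moreover have "\<forall>k>D. hcomp k a \<in> M"
  proof (intro allI impI)
    fix k assume k: "D < k"
    show "hcomp k a \<in> M"
    proof (cases "k \<le> N")
      case True
      have "k \<notin> S" using k Max_ge[OF fin] unfolding D_def by (meson not_le)
      then show ?thesis using True unfolding S_def by simp
    next
      case False
      then show ?thesis using hcomp_above[OF N, of k] ideal_zero[OF iM] by simp
    qed
  qed
  ultimately show ?thesis unfolding S_def by blast
qed

lemma lowpart_diff:
  assumes iM: "is_ideal M" and top: "\<forall>k>D. hcomp k a \<in> M"
  shows "a - (\<Sum>k\<le>D. hcomp k a) \<in> M"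
proof (rule mem_of_hcomps[OF iM])
  fix k
  show "hcomp k (a - (\<Sum>k\<le>D. hcomp k a)) \<in> M"
    unfolding hcomp_diff hcomp_lowpart using top ideal_zero[OF iM] by (cases "k \<le> D") auto
qed

lemma hprime_exists:
  assumes I: "homogeneous_ideal I" and nf: "\<forall>k. f ^ k \<notin> I"
  shows "\<exists>P. prime_ideal P \<and> homogeneous_ideal P \<and> I \<subseteq> P \<and> f \<notin> P"
proof -
  define AA where "AA = {Q. homogeneous_ideal Q \<and> I \<subseteq> Q \<and> (\<forall>k. f ^ k \<notin> Q)}"
  have "\<forall>C\<in>chains AA. \<exists>U\<in>AA. \<forall>X\<in>C. X \<subseteq> U"
  proof
    fix C assume C: "C \<in> chains AA"
    show "\<exists>U\<in>AA. \<forall>X\<in>C. X \<subseteq> U"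
    proof (cases "C = {}")
      case True
      have "I \<in> AA" using I nf unfolding AA_def by blast
      then show ?thesis using True by blast
    next
      case False
      have sub: "C \<subseteq> AA" and ch: "\<And>X Y. X \<in> C \<Longrightarrow> Y \<in> C \<Longrightarrow> X \<subseteq> Y \<or> Y \<subseteq> X"
        using C unfolding chains_def chain_subset_def by auto
      obtain X0 where X0: "X0 \<in> C" using False by blast
      have mem: "\<And>X. X \<in> C \<Longrightarrow> homogeneous_ideal X \<and> I \<subseteq> X \<and> (\<forall>k. f ^ k \<notin> X)"
        using sub unfolding AA_def by blast
      have "homogeneous_ideal (\<Union>C)"
        unfolding homogeneous_ideal_def is_ideal_def
      proof (intro conjI ballI allI)
        show "0 \<in> \<Union>C" using mem[OF X0] X0 unfolding homogeneous_ideal_def is_ideal_def by blast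
      next
        fix a b assume "a \<in> \<Union>C" "b \<in> \<Union>C"
        then obtain X Y where XY: "a \<in> X" "X \<in> C" "b \<in> Y" "Y \<in> C" by blast
        show "a + b \<in> \<Union>C"
        proof (cases "X \<subseteq> Y")
          case True
          then have "a + b \<in> Y" using mem[OF XY(4)] XY unfolding homogeneous_ideal_def is_ideal_def by blast
          then show ?thesis using XY by blast
        next
          case False
          then have "Y \<subseteq> X" using ch[OF XY(2) XY(4)] by blast
          then have "a + b \<in> X" using mem[OF XY(2)] XY unfolding homogeneous_ideal_def is_ideal_def by blast
          then show ?thesis using XY by blast
        qed
      next
        fix a r assume "a \<in> \<Union>C"
        then obtain X where X: "a \<in> X" "X \<in> C" by blast
        then have "r * a \<in> X" using mem[OF X(2)] unfolding homogeneous_ideal_def is_ideal_def by blast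
        then show "r * a \<in> \<Union>C" using X by blast
      next
        fix a d assume "a \<in> \<Union>C"
        then obtain X where X: "a \<in> X" "X \<in> C" by blast
        then have "hcomp d a \<in> X" using mem[OF X(2)] unfolding homogeneous_ideal_def by blast
        then show "hcomp d a \<in> \<Union>C" using X by blast
      qed
      moreover have "I \<subseteq> \<Union>C" using mem[OF X0] X0 by blast
      moreover have "\<forall>k. f ^ k \<notin> \<Union>C" using mem by blast
      ultimately have "\<Union>C \<in> AA" unfolding AA_def by blast
      then show ?thesis by blast
    qed
  qed
  from Zorn_Lemma2[OF this] obtain M where M: "M \<in> AA" and maxM: "\<And>X. X \<in> AA \<Longrightarrow> M \<subseteq> X \<Longrightarrow> X = M"
    by blast
  have hM: "homogeneous_ideal M" and IM: "I \<subseteq> M" and nfM: "\<And>k. f ^ k \<notin> M"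
    using M unfolding AA_def by auto
  have iM: "is_ideal M" and hcM: "\<And>p d. p \<in> M \<Longrightarrow> hcomp d p \<in> M"
    using hM unfolding homogeneous_ideal_def by auto
  have escape: "\<exists>k p r. f ^ k = p + r * a \<and> p \<in> M" if a: "homogeneous da a" "a \<notin> M" for a da
  proof -
    let ?Ma = "{p + r * a | p r. p \<in> M}"
    have h: "homogeneous_ideal ?Ma" by (rule ext_hideal[OF hM a(1)])
    have sub: "M \<subseteq> ?Ma"
    proof
      fix x assume "x \<in> M" then show "x \<in> ?Ma" by (intro CollectI exI[of _ x] exI[of _ 0]) simp
    qed
    have "a \<in> ?Ma" using ideal_zero[OF iM] by (intro CollectI exI[of _ 0] exI[of _ 1]) simp
    then have "?Ma \<noteq> M" using a by blast
    then have "?Ma \<notin> AA" using maxM sub by blast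
    then have "\<exists>k. f ^ k \<in> ?Ma" using h sub IM unfolding AA_def by blast
    then show ?thesis by blast
  qed
  have hp: False if as: "homogeneous da a" "homogeneous db b" "a * b \<in> M" "a \<notin> M" "b \<notin> M" for a b da db
  proof -
    obtain k p1 r1 where 1: "f ^ k = p1 + r1 * a" "p1 \<in> M" using escape as by blast
    obtain l p2 r2 where 2: "f ^ l = p2 + r2 * b" "p2 \<in> M" using escape as by blast
    have "f ^ (k + l) = p1 * (p2 + r2 * b) + (r1 * p2) * a + (r1 * r2) * (a * b)"
      unfolding power_add 1 2 by (simp add: algebra_simps)
    also have "\<dots> \<in> M"
      by (intro ideal_add[OF iM] ideal_mult2[OF iM 1(2)] ideal_mult2[OF iM ideal_mult[OF iM 2(2)]]
            ideal_mult[OF iM as(3)])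
    finally show False using nfM by blast
  qed
  have prime: "a \<in> M \<or> b \<in> M" if ab: "a * b \<in> M" for a b
  proof (rule ccontr)
    assume "\<not> (a \<in> M \<or> b \<in> M)"
    then have na: "a \<notin> M" and nb: "b \<notin> M" by auto
    obtain Da where Da: "hcomp Da a \<notin> M" "\<forall>k>Da. hcomp k a \<in> M" using top_index[OF iM hcM na] by blast
    obtain Db where Db: "hcomp Db b \<notin> M" "\<forall>k>Db. hcomp k b \<in> M" using top_index[OF iM hcM nb] by blast
    define a1 where "a1 = (\<Sum>k\<le>Da. hcomp k a)"
    define b1 where "b1 = (\<Sum>k\<le>Db. hcomp k b)"
    have a2: "a - a1 \<in> M" unfolding a1_def by (rule lowpart_diff[OF iM Da(2)])
    have b2: "b - b1 \<in> M" unfolding b1_def by (rule lowpart_diff[OF iM Db(2)])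
    have "a1 * b1 = a * b - a * (b - b1) - (a - a1) * b1" by (simp add: algebra_simps)
    also have "\<dots> \<in> M" by (intro ideal_diff[OF iM] ideal_mult[OF iM ab] ideal_mult[OF iM b2] ideal_mult2[OF iM a2] ab)
    finally have "hcomp (Da + Db) (a1 * b1) \<in> M" by (rule hcM)
    then have "hcomp Da a * hcomp Db b \<in> M" unfolding a1_def b1_def top_prod .
    then show False using hp[OF homogeneous_hcomp homogeneous_hcomp _ Da(1) Db(1)] by blast
  qed
  have "M \<noteq> UNIV" using nfM[of 0] by auto
  then have "prime_ideal M" unfolding prime_ideal_def using iM prime by blast
  moreover have "f \<notin> M" using nfM[of 1] by simp
  ultimately show ?thesis using hM IM by blast
qed


lemma mdeg_0: "mdeg (m::'v::finite \<Rightarrow>\<^sub>0 nat) = 0 \<Longrightarrow> m = 0"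
proof (rule poly_mapping_eqI)
  fix i assume "mdeg m = 0"
  then have "\<forall>j\<in>UNIV. Poly_Mapping.lookup m j = 0" unfolding mdeg_def by simp
  then show "Poly_Mapping.lookup m i = Poly_Mapping.lookup 0 i" by simp
qed

lemma mdeg_zero[simp]: "mdeg (0::'v::finite \<Rightarrow>\<^sub>0 nat) = 0"
  unfolding mdeg_def by simp

lemma hcomp0: "hcomp 0 (p::'v::finite mpoly) = Poly_Mapping.single 0 (Poly_Mapping.lookup p 0)"
proof (rule poly_mapping_eqI)
  fix m :: "'v \<Rightarrow>\<^sub>0 nat"
  show "Poly_Mapping.lookup (hcomp 0 p) m = Poly_Mapping.lookup (Poly_Mapping.single 0 (Poly_Mapping.lookup p 0)) m"
  proof (cases "m = 0")
    case True then show ?thesis by (simp add: lookup_hcomp)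
  next
    case False
    then have "mdeg m \<noteq> 0" using mdeg_0 by blast
    then show ?thesis using False by (simp add: lookup_hcomp lookup_single when_def)
  qed
qed

lemma Var_irr: "Var i \<in> irrelevant"
  unfolding irrelevant_def by (rule ideal_gen_base) simp

lemma monomial_irr:
  assumes "m \<noteq> 0" shows "Poly_Mapping.single m c \<in> (irrelevant :: 'v::finite mpoly set)"
proof -
  obtain i where i: "Poly_Mapping.lookup m i \<noteq> 0"
    using assms by (metis lookup_zero poly_mapping_eqI)
  have eq: "m = Poly_Mapping.single i 1 + (m - Poly_Mapping.single i 1)"
  proof (rule poly_mapping_eqI)
    fix j
    show "Poly_Mapping.lookup m j = Poly_Mapping.lookup (Poly_Mapping.single i 1 + (m - Poly_Mapping.single i 1)) j"
      unfolding lookup_add lookup_minus lookup_single when_def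
      using i by (cases "i = j") simp_all
  qed
  have "Poly_Mapping.single m c = Var i * Poly_Mapping.single (m - Poly_Mapping.single i 1) c"
    unfolding Var_def mult_single by (subst eq) simp
  also have "\<dots> \<in> irrelevant"
    using ideal_mult2[OF ideal_gen_ideal Var_irr[unfolded irrelevant_def]] unfolding irrelevant_def by blast
  finally show ?thesis .
qed

lemma zero_const_irr:
  assumes "hcomp 0 p = 0" shows "(p::'v::finite mpoly) \<in> irrelevant"
proof -
  have p0: "Poly_Mapping.lookup p 0 = 0"
    using assms unfolding hcomp0 by (metis lookup_single_eq lookup_zero)
  have "p = (\<Sum>m\<in>Poly_Mapping.keys p. Poly_Mapping.single m (Poly_Mapping.lookup p m))"
  proof (rule poly_mapping_eqI)
    fix k
    show "Poly_Mapping.lookup p k = Poly_Mapping.lookup (\<Sum>m\<in>Poly_Mapping.keys p. Poly_Mapping.single m (Poly_Mapping.lookup p m)) k"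
      unfolding lookup_sum lookup_single when_def by (simp add: in_keys_iff)
  qed
  also have "\<dots> \<in> irrelevant"
  proof (rule ideal_sum)
    show "is_ideal (irrelevant :: 'v mpoly set)" unfolding irrelevant_def by (rule ideal_gen_ideal)
  next
    fix m assume "m \<in> Poly_Mapping.keys p"
    then have "m \<noteq> 0" using p0 by (auto simp: in_keys_iff)
    then show "Poly_Mapping.single m (Poly_Mapping.lookup p m) \<in> irrelevant" by (rule monomial_irr)
  qed
  finally show ?thesis .
qed

lemma J_hcomp_low:
  assumes hA: "\<And>i. homogeneous (e - 1) (A i)" and d: "d < e - 1" and x: "x \<in> J_ideal A"
  shows "hcomp d x = 0"
proof -
  obtain F c where F: "finite F" "F \<subseteq> range A" "x = (\<Sum>g\<in>F. c g * g)"
    using x unfolding J_ideal_def ideal_gen_def by blast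
  have "hcomp d x = (\<Sum>g\<in>F. hcomp d (g * c g))" unfolding F(3) hcomp_sum by (simp add: mult.commute)
  also have "\<dots> = 0"
  proof (rule sum.neutral, rule ballI)
    fix g assume "g \<in> F"
    then obtain i where "g = A i" using F(2) by blast
    then show "hcomp d (g * c g) = 0" using hcomp_mult_homog[OF hA[of i], of d "c g"] d by simp
  qed
  finally show ?thesis .
qed

lemma single0_cancel:
  assumes "Poly_Mapping.single 0 c * q = (0::'v::finite mpoly)" "c \<noteq> 0" shows "q = 0"
proof -
  have "Poly_Mapping.single 0 (1 / c) * Poly_Mapping.single 0 c = (1::'v mpoly)"
    unfolding mult_single using assms(2) by simp
  then have "q = Poly_Mapping.single 0 (1 / c) * (Poly_Mapping.single 0 c * q)"
    by (metis mult.assoc mult_1)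
  then show ?thesis using assms(1) by simp
qed


lemma K_sub_radI:
  assumes e: "e \<ge> 2" and F: "F1 e A" and U: "A \<in> U_set e" and g: "g \<in> K_ideal A"
  shows "g \<in> radical (I_ideal A)"
proof (rule ccontr)
  assume "g \<notin> radical (I_ideal A)"
  then have ng: "\<forall>k. g ^ k \<notin> I_ideal A" unfolding radical_def by blast
  have hA: "\<And>i. homogeneous (e - 1) (A i)" using F unfolding F1_def by blast
  have H: "\<And>P. proj_point P \<Longrightarrow> \<not> K_ideal A \<subseteq> P \<Longrightarrow> division_point A P"
    using U unfolding U_set_def by blast
  show False
  proof (cases "\<forall>i j. d1 A i j = 0")
    case True
    have "1 \<in> I_ideal A" unfolding I_ideal_def
      by (rule CollectI, rule exI[of _ "\<lambda>_. 0"]) (simp add: wedge11_def True)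
    then show False using ng[rule_format, of 0] by simp
  next
    case False
    then obtain i0 j0 where d0: "d1 A i0 j0 \<noteq> 0" by blast
    obtain P where P: "prime_ideal P" "homogeneous_ideal P" "I_ideal A \<subseteq> P" "g \<notin> P"
      using hprime_exists[OF I_homogeneous[OF hA e] ng] by blast
    have iP: "is_ideal P" using P(1) unfolding prime_ideal_def by blast
    show False
    proof (cases "P = irrelevant")
      case False
      then have pp: "proj_point P" unfolding proj_point_def using P by blast
      have "K_ideal A \<subseteq> P"
      proof (rule ccontr)
        assume "\<not> K_ideal A \<subseteq> P"
        then have "division_point A P" by (rule H[OF pp])
        then obtain h s t where hst: "h \<in> I_ideal A" "s \<notin> P" "t \<notin> P" "t * (h * 1 - s * 1) = 0"
          unfolding division_point_def by blast
        have "t * h - t * s = 0" using hst(4) by (simp add: right_diff_distrib)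
        then have "t * s = t * h" by simp
        moreover have "t * h \<in> P" using hst(1) P(3) iP by (intro ideal_mult) auto
        ultimately have "t * s \<in> P" by simp
        then have "t \<in> P \<or> s \<in> P" using P(1) unfolding prime_ideal_def by blast
        then show False using hst(2,3) by blast
      qed
      then show False using g P(4) by blast
    next
      case True
      have "d1 A i0 j0 \<in> Cd_ideal A" unfolding Cd_ideal_def by (rule ideal_gen_base) blast
      then have gd: "g * d1 A i0 j0 \<in> J_ideal A" using g unfolding K_ideal_def by blast
      have "hcomp (e - 2) (g * d1 A i0 j0) = 0"
        by (rule J_hcomp_low[OF hA _ gd]) (use e in simp)
      moreover have "hcomp (e - 2) (d1 A i0 j0 * g) = d1 A i0 j0 * hcomp 0 g"
        by (subst hcomp_mult_homog[OF homogeneous_d1[OF hA]]) simp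
      ultimately have "Poly_Mapping.single 0 (Poly_Mapping.lookup g 0) * d1 A i0 j0 = 0"
        unfolding hcomp0 by (simp add: mult.commute)
      then have "Poly_Mapping.lookup g 0 = 0" using single0_cancel d0 by blast
      then have "hcomp 0 g = 0" unfolding hcomp0 by simp
      then have "g \<in> irrelevant" by (rule zero_const_irr)
      then show False using True P(4) by blast
    qed
  qed
qed

theorem theorem4p12:
  fixes A :: "'v::finite \<Rightarrow> 'v mpoly" and e :: nat
  assumes "e \<ge> 2" and "F1 e A"
  shows "(A \<in> U_set e \<longrightarrow> radical (I_ideal A) = radical (K_ideal A))
       \<and> (radical (I_ideal A) = radical (K_ideal A) \<longrightarrow> A \<in> U_set e)"
proof (intro conjI impI)
  assume U: "A \<in> U_set e"
  show "radical (I_ideal A) = radical (K_ideal A)"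
  proof
    show "radical (I_ideal A) \<subseteq> radical (K_ideal A)"
      unfolding radical_def using I_sub_K by blast
  next
    show "radical (K_ideal A) \<subseteq> radical (I_ideal A)"
    proof
      fix f assume "f \<in> radical (K_ideal A)"
      then obtain k where "f ^ k \<in> K_ideal A" unfolding radical_def by blast
      then have "f ^ k \<in> radical (I_ideal A)" by (rule K_sub_radI[OF assms U])
      then obtain l where "(f ^ k) ^ l \<in> I_ideal A" unfolding radical_def by blast
      then have "f ^ (k * l) \<in> I_ideal A" by (simp add: power_mult)
      then show "f \<in> radical (I_ideal A)" unfolding radical_def by blast
    qed
  qed
next
  assume R: "radical (I_ideal A) = radical (K_ideal A)"
  have "division_point A P" if P: "proj_point P" "\<not> K_ideal A \<subseteq> P" for P
  proof -
    have pr: "prime_ideal P" using P(1) unfolding proj_point_def by blast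
    obtain k where k: "k \<in> K_ideal A" "k \<notin> P" using P(2) by blast
    have "k \<in> radical (K_ideal A)" unfolding radical_def using k(1) by (intro CollectI exI[of _ 1]) simp
    then have "k \<in> radical (I_ideal A)" using R by simp
    then obtain n where n: "k ^ n \<in> I_ideal A" unfolding radical_def by blast
    have "k ^ n \<notin> P" by (rule pow_not_in_prime[OF pr k(2)])
    moreover have "(1::'v mpoly) \<notin> P" using pow_not_in_prime[OF pr k(2), of 0] by simp
    moreover have "(1::'v mpoly) * (k ^ n * 1 - k ^ n * 1) = 0" by simp
    ultimately show ?thesis unfolding division_point_def using n by blast
  qed
  then show "A \<in> U_set e" unfolding U_set_def using assms(2) by blast
qed

end
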